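(* Let $U_e=U_f=U\ge0$, $\beta<-2$, $\kappa_g\ge16$, $\alpha\le 2\min\{\beta,-3\}-1$, and let $g$ be the deterministic source. Let $V_k,W_k$ ($k\ne0$) be any complex numbers with $|V_k|,|W_k|\le\Xi$, $V_{-k}=\overline{V_k}$, $W_{-k}=\overline{W_k}$, and define $$\vartheta_k:=i|k|^{-2}\sum_{j\notin\{0,k\}}|k-j|^\beta\gamma_j\,U\big[(e_{k-j}\cdot j)V_{k-j}+(f_{k-j}\cdot j)W_{k-j}\big].$$ Then there is a constant $C<\infty$ depending only on $(\gamma_k)$, $c_g$, $\kappa_g$, $\alpha$, $\beta$ such that for all $k\ne0$, $$|\vartheta_k|\le C\,U\Xi\,|k|^{-2}K_\beta(|k|),\qquad K_\beta(s):=\min\{1,(s/(2\kappa_g))^{\beta}\}.$$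
   Context: Craya–Herring basis: for $k=(k_x,k_y,k_z)\in\mathbb Z^3$ with $|k_h|:=\sqrt{k_x^2+k_y^2}>0$, $e_k=(k_y,-k_x,0)/|k_h|$, $f_k=(k_xk_z,k_yk_z,-|k_h|^2)/(|k||k_h|)$; for $k\ne0$ on the $z$-axis, a fixed orthonormal pair of unit vectors orthogonal to $k$. Source coefficients: complex $\gamma_k$ ($k\in\mathbb Z^3\setminus\{0\}$), $\gamma_{-k}=\overline{\gamma_k}$, with constants $c_g\ge0$, $\kappa_g>1$, $\alpha<0$ such that $|\gamma_k|\le c_g|k|^\alpha$ for $|k|\ge\kappa_g$ (the deterministic source is $\Delta^{-1}g=\sum_{k\ne0}\gamma_ke^{ik\cdot x}$ on $[0,2\pi]^3$, and $\vartheta=-\Delta^{-1}(u\cdot\nabla\Delta^{-1}g)$ for $u=\sum_{k\ne0}|k|^\beta U[e_kV_k+f_kW_k]e^{ik\cdot x}$). *)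

theory Defs
  imports "HOL-Analysis.Analysis"
begin

type_synonym lat = "int \<times> int \<times> int"
type_synonym vec3 = "real \<times> real \<times> real"

definition lsub :: "lat \<Rightarrow> lat \<Rightarrow> lat" where
  "lsub k j = (case k of (a,b,c) \<Rightarrow> case j of (x,y,z) \<Rightarrow> (a-x, b-y, c-z))"

definition lneg :: "lat \<Rightarrow> lat" where
  "lneg k = (case k of (a,b,c) \<Rightarrow> (-a,-b,-c))"

definition rv :: "lat \<Rightarrow> vec3" where
  "rv k = (case k of (a,b,c) \<Rightarrow> (real_of_int a, real_of_int b, real_of_int c))"

definition dot3 :: "vec3 \<Rightarrow> vec3 \<Rightarrow> real" where
  "dot3 u v = (case u of (a,b,c) \<Rightarrow> case v of (x,y,z) \<Rightarrow> a*x + b*y + c*z)"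

definition lnorm :: "lat \<Rightarrow> real" where
  "lnorm k = (case k of (a,b,c) \<Rightarrow> sqrt (real_of_int (a^2 + b^2 + c^2)))"

definition hnorm :: "lat \<Rightarrow> real" where
  "hnorm k = (case k of (a,b,c) \<Rightarrow> sqrt (real_of_int (a^2 + b^2)))"

text \<open>Craya--Herring basis; ez, fz give the fixed orthonormal pair for k on the z-axis.\<close>
definition CH_e :: "(lat \<Rightarrow> vec3) \<Rightarrow> lat \<Rightarrow> vec3" where
  "CH_e ez k = (if hnorm k > 0 then
     (case k of (a,b,c) \<Rightarrow> (real_of_int b / hnorm k, - real_of_int a / hnorm k, 0))
     else ez k)"

definition CH_f :: "(lat \<Rightarrow> vec3) \<Rightarrow> lat \<Rightarrow> vec3" where
  "CH_f fz k = (if hnorm k > 0 then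
     (case k of (a,b,c) \<Rightarrow>
        (real_of_int (a*c) / (lnorm k * hnorm k),
         real_of_int (b*c) / (lnorm k * hnorm k),
         - ((hnorm k)^2) / (lnorm k * hnorm k)))
     else fz k)"

definition axis_pair :: "(lat \<Rightarrow> vec3) \<Rightarrow> (lat \<Rightarrow> vec3) \<Rightarrow> bool" where
  "axis_pair ez fz \<longleftrightarrow> (\<forall>k. k \<noteq> (0,0,0) \<and> hnorm k = 0 \<longrightarrow>
      dot3 (ez k) (ez k) = 1 \<and> dot3 (fz k) (fz k) = 1 \<and> dot3 (ez k) (fz k) = 0 \<and>
      dot3 (ez k) (rv k) = 0 \<and> dot3 (fz k) (rv k) = 0)"

definition Kbeta :: "real \<Rightarrow> real \<Rightarrow> real \<Rightarrow> real" where
  "Kbeta kg \<beta> s = min 1 ((s / (2*kg)) powr \<beta>)"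

definition theta :: "(lat \<Rightarrow> vec3) \<Rightarrow> (lat \<Rightarrow> vec3) \<Rightarrow> (lat \<Rightarrow> complex) \<Rightarrow> real \<Rightarrow> real
    \<Rightarrow> (lat \<Rightarrow> complex) \<Rightarrow> (lat \<Rightarrow> complex) \<Rightarrow> lat \<Rightarrow> complex" where
  "theta ez fz \<gamma> \<beta> U V W k =
     \<i> * complex_of_real (lnorm k powr (-2)) *
     infsum (\<lambda>j. complex_of_real (lnorm (lsub k j) powr \<beta>) * \<gamma> j * complex_of_real U *
        (complex_of_real (dot3 (CH_e ez (lsub k j)) (rv j)) * V (lsub k j)
       + complex_of_real (dot3 (CH_f fz (lsub k j)) (rv j)) * W (lsub k j)))
       {j. j \<noteq> (0,0,0) \<and> j \<noteq> k}"

end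

theory Submission
  imports Defs
begin


lemma rv_lsub: "rv (lsub k j) = rv k - rv j"
  by (cases k; cases j) (simp add: rv_def lsub_def)

lemma lnorm_eq: "lnorm k = norm (rv k)"
  by (cases k) (simp add: lnorm_def rv_def norm_prod_def power2_eq_square)

lemma dot3_eq: "dot3 u v = inner u v"
  by (cases u; cases v) (simp add: dot3_def inner_prod_def)

lemma rv_zero_iff: "rv k = 0 \<longleftrightarrow> k = (0,0,0)"
  by (cases k) (simp add: rv_def zero_prod_def)

lemma lnorm_ge1: assumes "k \<noteq> (0,0,0)" shows "1 \<le> lnorm k"
proof -
  obtain a b c where k: "k = (a,b,c)" by (cases k) auto
  have "a \<noteq> 0 \<or> b \<noteq> 0 \<or> c \<noteq> 0" using assms k by auto
  hence "1 \<le> a^2 + b^2 + c^2"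
    by (smt (verit) power2_less_eq_zero_iff zero_le_power2 int_one_le_iff_zero_less)
  hence "(1::real) \<le> real_of_int (a^2 + b^2 + c^2)" by linarith
  thus ?thesis by (simp add: lnorm_def k del: of_int_add of_int_power)
qed



lemma inner_one_norm: "inner x x = (1::real) \<Longrightarrow> norm (x::'a::real_inner) = 1"
  by (simp add: norm_eq_sqrt_inner)

lemma CH_e_unit:
  assumes ax: "axis_pair ez fz" and m: "m \<noteq> (0,0,0)"
  shows "norm (CH_e ez m) = 1"
proof (cases "hnorm m > 0")
  case True
  obtain a b c where k: "m = (a,b,c)" by (cases m) auto
  let ?h = "hnorm m"
  have h2: "?h^2 = (real_of_int a)^2 + (real_of_int b)^2"
    by (simp add: hnorm_def k)
  have "inner (CH_e ez m) (CH_e ez m) = ((real_of_int b)^2 + (real_of_int a)^2) / ?h^2"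
    using True by (simp add: CH_e_def k inner_prod_def power2_eq_square add_divide_distrib)
  also have "\<dots> = ?h^2 / ?h^2" by (simp add: h2 add.commute)
  also have "\<dots> = 1" using True by simp
  finally show ?thesis by (rule inner_one_norm)
next
  case False
  moreover have "hnorm m \<ge> 0" by (cases m) (simp add: hnorm_def)
  ultimately have "hnorm m = 0" by linarith
  hence "dot3 (ez m) (ez m) = 1" using ax m unfolding axis_pair_def by blast
  thus ?thesis using False by (intro inner_one_norm) (simp add: CH_e_def dot3_eq)
qed

lemma CH_f_unit:
  assumes ax: "axis_pair ez fz" and m: "m \<noteq> (0,0,0)"
  shows "norm (CH_f fz m) = 1"
proof (cases "hnorm m > 0")
  case True
  obtain a b c where k: "m = (a,b,c)" by (cases m) auto
  let ?h = "hnorm m" and ?L = "lnorm m"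
  have h2: "?h^2 = (real_of_int a)^2 + (real_of_int b)^2"
    by (simp add: hnorm_def k)
  have L2: "?L^2 = (real_of_int a)^2 + (real_of_int b)^2 + (real_of_int c)^2"
    by (simp add: lnorm_def k)
  have Lp: "?L > 0" using lnorm_ge1[OF m] by simp
  have "inner (CH_f fz m) (CH_f fz m) =
     ((real_of_int a * real_of_int c)^2 + (real_of_int b * real_of_int c)^2 + (?h^2)^2) / (?L * ?h)^2"
    using True by (simp add: CH_f_def k inner_prod_def power2_eq_square add_divide_distrib)
  also have "\<dots> = (?h^2 * ((real_of_int c)^2 + ?h^2)) / (?L^2 * ?h^2)"
  proof -
    have "(real_of_int a * real_of_int c)^2 + (real_of_int b * real_of_int c)^2 = ?h^2 * (real_of_int c)^2"
      by (simp add: h2 power_mult_distrib algebra_simps)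
    thus ?thesis by (simp add: power_mult_distrib algebra_simps power2_eq_square)
  qed
  also have "\<dots> = (?h^2 * ?L^2) / (?L^2 * ?h^2)"
    by (simp add: L2 h2 algebra_simps)
  also have "\<dots> = 1" using True Lp by simp
  finally show ?thesis by (rule inner_one_norm)
next
  case False
  moreover have "hnorm m \<ge> 0" by (cases m) (simp add: hnorm_def)
  ultimately have "hnorm m = 0" by linarith
  hence "dot3 (fz m) (fz m) = 1" using ax m unfolding axis_pair_def by blast
  thus ?thesis using False by (intro inner_one_norm) (simp add: CH_f_def dot3_eq)
qed

lemma dot_unit_le: "norm u = 1 \<Longrightarrow> \<bar>dot3 u v\<bar> \<le> norm v"
  unfolding dot3_eq using Cauchy_Schwarz_ineq2[of u v] by simp



lemma sq_powr: "(x::real) \<ge> 0 \<Longrightarrow> (x^2) powr a = x powr (2*a)"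
proof -
  assume "x \<ge> 0"
  hence "x^2 = x powr 2" by simp
  thus ?thesis by (simp only: powr_powr)
qed

lemma sum1d_nat: "summable (\<lambda>n::nat. (1 + (real n)^2) powr (-2/3))"
proof (rule summable_comparison_test')
  show "summable (\<lambda>n::nat. real n powr (-4/3))" by (subst summable_real_powr_iff) simp
  fix n :: nat assume "1 \<le> n"
  hence np: "real n > 0" by simp
  have "(1 + (real n)^2) powr (-2/3) \<le> ((real n)^2) powr (-2/3)"
    by (rule powr_mono2') (use np in auto)
  also have "((real n)^2) powr (-2/3) = real n powr (-4/3)"
    by (simp add: sq_powr)
  finally show "norm ((1 + (real n)^2) powr (-2/3)) \<le> real n powr (-4/3)" by simp
qed

lemma sum1d: "(\<lambda>a::int. (1 + (real_of_int a)^2) powr (-2/3)) summable_on UNIV"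
proof -
  let ?f = "\<lambda>a::int. (1 + (real_of_int a)^2) powr (-2/3)"
  have n: "(\<lambda>n::nat. (1 + (real n)^2) powr (-2/3)) summable_on UNIV"
    using sum1d_nat summable_on_UNIV_nonneg_real_iff by simp
  have "?f summable_on range int"
    by (subst summable_on_reindex) (use n in \<open>auto simp: o_def\<close>)
  moreover have "?f summable_on range (\<lambda>n. - int n)"
    by (subst summable_on_reindex) (use n in \<open>auto simp: o_def inj_on_def\<close>)
  ultimately have "?f summable_on (range int \<union> range (\<lambda>n. - int n))"
    by (rule summable_on_union)
  moreover have "range int \<union> range (\<lambda>n. - int n) = (UNIV::int set)"
  proof (intro set_eqI iffI)
    fix x :: int
    show "x \<in> range int \<union> range (\<lambda>n. - int n)"
    proof (cases "x \<ge> 0")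
      case True hence "x = int (nat x)" by simp
      thus ?thesis by blast
    next
      case False hence "x = - int (nat (-x))" by simp
      thus ?thesis by blast
    qed
  qed auto
  ultimately show ?thesis by simp
qed



lemma nonneg_summable_abs:
  fixes f :: "'a \<Rightarrow> real"
  assumes "\<And>x. f x \<ge> 0"
  shows "f summable_on A \<longleftrightarrow> Infinite_Set_Sum.abs_summable_on f A"
proof -
  have "f summable_on A \<longleftrightarrow> Infinite_Sum.abs_summable_on f A"
    by (rule summable_on_iff_abs_summable_on_real)
  also have "\<dots> \<longleftrightarrow> Infinite_Set_Sum.abs_summable_on f A"
    by (rule abs_summable_equivalent)
  finally show ?thesis .
qed

definition f1 :: "int \<Rightarrow> real" where "f1 a = (1 + (real_of_int a)^2) powr (-2/3)"

lemma F3_summable: "(\<lambda>(a,b,c). f1 a * (f1 b * f1 c)) summable_on (UNIV :: lat set)"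
proof -
  have f1nn: "\<And>a. f1 a \<ge> 0" by (simp add: f1_def)
  have s1: "Infinite_Set_Sum.abs_summable_on f1 UNIV"
    using sum1d nonneg_summable_abs[of f1] f1nn unfolding f1_def by blast
  have s2: "Infinite_Set_Sum.abs_summable_on (\<lambda>(b,c). f1 b * f1 c) (UNIV \<times> UNIV)"
    by (rule abs_summable_on_product) (use s1 in auto)
  have s3: "Infinite_Set_Sum.abs_summable_on (\<lambda>(a,bc). f1 a * (\<lambda>(b,c). f1 b * f1 c) bc) (UNIV \<times> (UNIV \<times> UNIV))"
    by (rule abs_summable_on_product) (use s1 s2 in auto)
  have eq: "(\<lambda>(a,bc). f1 a * (\<lambda>(b,c). f1 b * f1 c) bc) = (\<lambda>(a,b,c). f1 a * (f1 b * f1 c))"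
    by auto
  show ?thesis
    using s3 unfolding eq UNIV_Times_UNIV
    by (subst nonneg_summable_abs) (auto simp: f1nn)
qed



lemma cube_powr: "(x::real) \<ge> 0 \<Longrightarrow> (x^3) powr a = x powr (3*a)"
proof -
  assume "x \<ge> 0"
  hence "x^3 = x powr 3" by simp
  thus ?thesis by (simp only: powr_powr)
qed

lemma powr_m2: "(w::real) > 0 \<Longrightarrow> w powr (-2) = 1 / w^2"
proof -
  assume "w > 0"
  have a: "w powr 2 = w^2" by (rule powr_numeral) (use \<open>w > 0\<close> in simp)
  have "w powr (-2) = inverse (w powr 2)" by (rule powr_minus)
  thus ?thesis by (simp only: a inverse_eq_divide)
qed

lemma lnorm_sq: "k = (a,b,c) \<Longrightarrow> (lnorm k)^2 = (real_of_int a)^2 + (real_of_int b)^2 + (real_of_int c)^2"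
  by (simp add: lnorm_def)

lemma point_bound:
  assumes p: "p \<le> -4"
  shows "lnorm m powr p \<le> 16 * (case m of (a,b,c) \<Rightarrow> f1 a * (f1 b * f1 c))"
proof (cases "m = (0,0,0)")
  case True thus ?thesis by (simp add: lnorm_def f1_def)
next
  case False
  obtain a b c where k: "m = (a,b,c)" by (cases m) auto
  let ?L = "lnorm m"
  define x where "x = 1 + (real_of_int a)^2"
  define y where "y = 1 + (real_of_int b)^2"
  define z where "z = 1 + (real_of_int c)^2"
  have L1: "?L \<ge> 1" using lnorm_ge1[OF False] .
  have xyz: "x \<ge> 1" "y \<ge> 1" "z \<ge> 1" by (auto simp: x_def y_def z_def)
  have s: "x + y + z \<le> 4 * ?L^2" using lnorm_sq[OF k] L1 unfolding x_def y_def z_def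
    by (smt (verit) one_le_power)
  have "x*y*z \<le> (x+y+z)^3"
  proof -
    have "x*y*z \<le> (x+y+z)*(x+y+z)*(x+y+z)"
      by (intro mult_mono) (use xyz in auto)
    thus ?thesis by (simp add: power3_eq_cube)
  qed
  also have "\<dots> \<le> (4 * ?L^2)^3" by (rule power_mono) (use s xyz in auto)
  finally have P: "x*y*z \<le> (4 * ?L^2)^3" .
  have "((4 * ?L^2)^3) powr (-2/3) \<le> (x*y*z) powr (-2/3)"
    by (rule powr_mono2') (use P xyz in auto)
  moreover have "((4 * ?L^2)^3) powr (-2/3) = 1 / (16 * ?L^4)"
  proof -
    have nn: "4*?L^2 \<ge> 0" by simp
    have e: "(3::real)*(-2/3) = -2" by simp
    have "((4 * ?L^2)^3) powr (-2/3) = (4 * ?L^2) powr (-2)" using cube_powr[OF nn, of "-2/3"] unfolding e .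
    also have "\<dots> = 1 / (4 * ?L^2)^2" by (rule powr_m2) (use L1 in simp)
    also have "\<dots> = 1 / (16 * ?L^4)" by (simp add: power_mult_distrib)
    finally show ?thesis .
  qed
  moreover have "(x*y*z) powr (-2/3) = f1 a * (f1 b * f1 c)"
    using xyz by (simp add: f1_def x_def y_def z_def powr_mult)
  ultimately have F: "1 / (16 * ?L^4) \<le> f1 a * (f1 b * f1 c)" by simp
  have "?L powr p \<le> ?L powr (-4)" by (rule powr_mono) (use p L1 in auto)
  also have "\<dots> = 1 / ?L^4"
  proof -
    have L0: "0 \<le> ?L" using L1 by simp
    have a: "?L powr 4 = ?L^4" by (rule powr_numeral) (rule L0)
    have "?L powr (-4) = inverse (?L powr 4)" by (rule powr_minus)
    thus ?thesis by (simp only: a inverse_eq_divide)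
  qed
  also have "\<dots> = 16 * (1 / (16 * ?L^4))" by simp
  also have "\<dots> \<le> 16 * (f1 a * (f1 b * f1 c))" using F by simp
  finally show ?thesis by (simp add: k)
qed

lemma sum3d:
  assumes p: "p \<le> -4"
  shows "(\<lambda>m. lnorm m powr p) summable_on UNIV"
proof (rule summable_on_comparison_test)
  show "(\<lambda>m. 16 * (case m of (a,b,c) \<Rightarrow> f1 a * (f1 b * f1 c))) summable_on UNIV"
    by (rule summable_on_cmult_right) (rule F3_summable)
qed (use point_bound[OF p] in auto)



lemma powr_sq': "(x::real) \<ge> 1 \<Longrightarrow> (x powr u)^2 = x powr (2*u)"
  using powr_power[of x u 2] by simp

lemma powr_cancel1: "(N::real) \<ge> 1 \<Longrightarrow> N powr (-\<beta>) * N powr \<beta> = 1"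
proof -
  assume "N \<ge> 1"
  have "N powr (-\<beta>) * N powr \<beta> = N powr (-\<beta> + \<beta>)" by (rule powr_add[symmetric])
  thus ?thesis using \<open>N \<ge> 1\<close> by simp
qed

lemma powr_add2: "(J::real) powr (-\<beta>) * J powr a = J powr (a - \<beta>)"
proof -
  have "J powr (-\<beta>) * J powr a = J powr (-\<beta> + a)" by (rule powr_add[symmetric])
  moreover have "-\<beta> + a = a - \<beta>" by simp
  ultimately show ?thesis by (simp only:)
qed

lemma amgm: "(x::real) * y \<le> (x^2 + y^2)/2"
proof -
  have "0 \<le> (x - y)^2" by simp
  thus ?thesis by (simp add: power2_diff)
qed

lemma conv_point:
  fixes K N J a \<beta> :: real
  assumes b: "\<beta> < 0" and N: "N \<ge> 1" and J: "J \<ge> 1" and K: "K \<le> N + J" "K > 0"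
  shows "K powr (-\<beta>) * (N powr \<beta> * J powr a)
     \<le> 2 powr (-\<beta>) * (J powr a + (N powr (2*\<beta>) + J powr (2*(a-\<beta>)))/2)"
proof -
  define M where "M = max N J"
  have M1: "M \<ge> 1" using N J by (simp add: M_def)
  have KM: "K \<le> 2*M" using K N J by (simp add: M_def)
  have "K powr (-\<beta>) \<le> (2*M) powr (-\<beta>)"
    by (rule powr_mono2) (use b K KM in simp_all)
  also have "\<dots> = 2 powr (-\<beta>) * M powr (-\<beta>)" by (rule powr_mult)
  also have "\<dots> \<le> 2 powr (-\<beta>) * (N powr (-\<beta>) + J powr (-\<beta>))"
  proof (rule mult_left_mono)
    show "M powr (-\<beta>) \<le> N powr (-\<beta>) + J powr (-\<beta>)"
    proof (cases "N \<le> J")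
      case True hence "M = J" by (simp add: M_def)
      show ?thesis unfolding \<open>M = J\<close> using powr_ge_zero[of N "-\<beta>"] by linarith
    next
      case False hence "M = N" by (simp add: M_def)
      show ?thesis unfolding \<open>M = N\<close> using powr_ge_zero[of J "-\<beta>"] by linarith
    qed
  qed simp
  finally have K1: "K powr (-\<beta>) \<le> 2 powr (-\<beta>) * (N powr (-\<beta>) + J powr (-\<beta>))" .
  have sq: "N powr \<beta> * J powr (a - \<beta>) \<le> ((N powr \<beta>)^2 + (J powr (a-\<beta>))^2) / 2"
    by (rule amgm)
  have "K powr (-\<beta>) * (N powr \<beta> * J powr a)
      \<le> 2 powr (-\<beta>) * (N powr (-\<beta>) + J powr (-\<beta>)) * (N powr \<beta> * J powr a)"
    by (rule mult_right_mono[OF K1 mult_nonneg_nonneg[OF powr_ge_zero powr_ge_zero]])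
  also have "\<dots> = 2 powr (-\<beta>) * ((N powr (-\<beta>) * N powr \<beta>) * J powr a + N powr \<beta> * (J powr (-\<beta>) * J powr a))"
    by algebra
  also have "\<dots> = 2 powr (-\<beta>) * (J powr a + N powr \<beta> * J powr (a - \<beta>))"
    by (simp only: powr_cancel1[OF N] powr_add2[of J \<beta> a] mult_1)
  also have "\<dots> \<le> 2 powr (-\<beta>) * (J powr a + ((N powr \<beta>)^2 + (J powr (a-\<beta>))^2) / 2)"
    by (rule mult_left_mono[OF add_left_mono[OF sq] powr_ge_zero])
  also have "\<dots> = 2 powr (-\<beta>) * (J powr a + (N powr (2*\<beta>) + J powr (2*(a-\<beta>)))/2)"
    by (simp only: powr_sq'[OF N] powr_sq'[OF J])
  finally show ?thesis .
qed



definition S3 :: "real \<Rightarrow> real" where "S3 p = infsum (\<lambda>m. lnorm m powr p) UNIV"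

lemma lsub_bij: "bij (lsub k)"
proof (rule o_bij[of "lsub k"])
  show "lsub k \<circ> lsub k = id" by (rule ext) (auto simp: lsub_def split: prod.splits)
qed (rule ext, auto simp: lsub_def split: prod.splits)

lemma lnorm_tri: "lnorm k \<le> lnorm (lsub k j) + lnorm j"
proof -
  have "rv k = rv (lsub k j) + rv j" by (simp add: rv_lsub)
  thus ?thesis unfolding lnorm_eq by (metis norm_triangle_ineq)
qed

lemma lsub_self: "lsub k k = (0,0,0)" by (auto simp: lsub_def split: prod.splits)

lemma lsub_nz: "j \<noteq> k \<Longrightarrow> lsub k j \<noteq> (0,0,0)"
  by (auto simp: lsub_def split: prod.splits)

lemma reidx_summable: "(\<lambda>j. f (lsub k j)) summable_on UNIV \<longleftrightarrow> f summable_on UNIV"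
  by (rule summable_on_reindex_bij_betw) (rule lsub_bij)

lemma reidx_infsum: "infsum (\<lambda>j. f (lsub k j)) UNIV = infsum f UNIV"
  by (rule infsum_reindex_bij_betw) (rule lsub_bij)

lemma conv_sum:
  fixes \<beta> a :: real
  assumes b: "\<beta> < 0" and pa: "a \<le> -4" and pb: "2*\<beta> \<le> -4" and pc: "2*(a-\<beta>) \<le> -4"
    and k: "k \<noteq> (0,0,0)"
  defines "A \<equiv> {j. j \<noteq> (0,0,0) \<and> j \<noteq> k}"
  defines "h \<equiv> (\<lambda>j. lnorm (lsub k j) powr \<beta> * lnorm j powr a)"
  shows "h summable_on A \<and> infsum h A \<le> 2 powr (-\<beta>) * (S3 a + (1/2) * (S3 (2*\<beta>) + S3 (2*(a-\<beta>)))) * lnorm k powr \<beta>"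
proof -
  let ?K = "lnorm k"
  define c where "c = ?K powr \<beta> * 2 powr (-\<beta>)"
  define R where "R = (\<lambda>j. c * (lnorm j powr a + (1/2) * (lnorm (lsub k j) powr (2*\<beta>) + lnorm j powr (2*(a-\<beta>)))))"
  have sa: "(\<lambda>j. lnorm j powr a) summable_on UNIV" by (rule sum3d[OF pa])
  have sb: "(\<lambda>j. lnorm (lsub k j) powr (2*\<beta>)) summable_on UNIV"
    using sum3d[OF pb] reidx_summable[of "\<lambda>m. lnorm m powr (2*\<beta>)" k] by simp
  have sc: "(\<lambda>j. lnorm j powr (2*(a-\<beta>))) summable_on UNIV" by (rule sum3d[OF pc])
  have sbc: "(\<lambda>j. lnorm (lsub k j) powr (2*\<beta>) + lnorm j powr (2*(a-\<beta>))) summable_on UNIV"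
    by (rule summable_on_add[OF sb sc])
  have sbc2: "(\<lambda>j. (1/2) * (lnorm (lsub k j) powr (2*\<beta>) + lnorm j powr (2*(a-\<beta>)))) summable_on UNIV"
    by (rule summable_on_cmult_right[OF sbc])
  have sabc: "(\<lambda>j. lnorm j powr a + (1/2) * (lnorm (lsub k j) powr (2*\<beta>) + lnorm j powr (2*(a-\<beta>)))) summable_on UNIV"
    by (rule summable_on_add[OF sa sbc2])
  have sR: "R summable_on UNIV" unfolding R_def by (rule summable_on_cmult_right[OF sabc])
  have iR: "infsum R UNIV = c * (S3 a + (1/2) * (S3 (2*\<beta>) + S3 (2*(a-\<beta>))))"
  proof -
    have "infsum R UNIV = c * infsum (\<lambda>j. lnorm j powr a + (1/2) * (lnorm (lsub k j) powr (2*\<beta>) + lnorm j powr (2*(a-\<beta>)))) UNIV"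
      unfolding R_def by (rule infsum_cmult_right) (use sabc in blast)
    also have "infsum (\<lambda>j. lnorm j powr a + (1/2) * (lnorm (lsub k j) powr (2*\<beta>) + lnorm j powr (2*(a-\<beta>)))) UNIV
       = S3 a + infsum (\<lambda>j. (1/2) * (lnorm (lsub k j) powr (2*\<beta>) + lnorm j powr (2*(a-\<beta>)))) UNIV"
      unfolding S3_def by (rule infsum_add[OF sa sbc2])
    also have "infsum (\<lambda>j. (1/2) * (lnorm (lsub k j) powr (2*\<beta>) + lnorm j powr (2*(a-\<beta>)))) UNIV
       = (1/2) * infsum (\<lambda>j. lnorm (lsub k j) powr (2*\<beta>) + lnorm j powr (2*(a-\<beta>))) UNIV"
      by (rule infsum_cmult_right) (use sbc in blast)
    also have "infsum (\<lambda>j. lnorm (lsub k j) powr (2*\<beta>) + lnorm j powr (2*(a-\<beta>))) UNIV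
       = infsum (\<lambda>j. lnorm (lsub k j) powr (2*\<beta>)) UNIV + S3 (2*(a-\<beta>))"
      unfolding S3_def by (rule infsum_add[OF sb sc])
    also have "infsum (\<lambda>j. lnorm (lsub k j) powr (2*\<beta>)) UNIV = S3 (2*\<beta>)"
      unfolding S3_def by (rule reidx_infsum)
    finally show ?thesis .
  qed
  have Kp: "?K > 0" using lnorm_ge1[OF k] by simp
  have pt: "h j \<le> R j" if j: "j \<in> A" for j
  proof -
    have j0: "j \<noteq> (0,0,0)" and jk: "j \<noteq> k" using j by (auto simp: A_def)
    have N: "lnorm (lsub k j) \<ge> 1" by (rule lnorm_ge1[OF lsub_nz[OF jk]])
    have J: "lnorm j \<ge> 1" by (rule lnorm_ge1[OF j0])
    have cp: "?K powr (-\<beta>) * h j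
       \<le> 2 powr (-\<beta>) * (lnorm j powr a + (lnorm (lsub k j) powr (2*\<beta>) + lnorm j powr (2*(a-\<beta>)))/2)"
      unfolding h_def by (rule conv_point[OF b N J lnorm_tri Kp])
    have e: "?K powr \<beta> * ?K powr (-\<beta>) = 1"
      using powr_cancel1[of ?K "-\<beta>"] lnorm_ge1[OF k] by (simp add: mult.commute)
    have "h j = ?K powr \<beta> * (?K powr (-\<beta>) * h j)" by (simp only: mult.assoc[symmetric] e mult_1)
    also have "\<dots> \<le> ?K powr \<beta> * (2 powr (-\<beta>) * (lnorm j powr a + (lnorm (lsub k j) powr (2*\<beta>) + lnorm j powr (2*(a-\<beta>)))/2))"
      by (rule mult_left_mono[OF cp powr_ge_zero])
    also have "\<dots> = R j" unfolding R_def c_def by (simp add: algebra_simps)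
    finally show ?thesis .
  qed
  have hnn: "\<And>j. h j \<ge> 0" unfolding h_def by simp
  have RA: "R summable_on A" by (rule summable_on_subset_banach[OF sR]) simp
  have hA: "h summable_on A"
    by (rule summable_on_comparison_test[OF RA pt hnn])
  have "infsum h A \<le> infsum R A" by (rule infsum_mono[OF hA RA pt])
  also have "\<dots> \<le> infsum R UNIV"
  proof (rule infsum_mono2[OF RA sR])
    fix x show "R x \<ge> 0" unfolding R_def c_def by simp
  qed simp
  also have "\<dots> = 2 powr (-\<beta>) * (S3 a + (1/2) * (S3 (2*\<beta>) + S3 (2*(a-\<beta>)))) * ?K powr \<beta>"
    unfolding iR c_def by (simp only: mult_ac)
  finally show ?thesis using hA by blast
qed



lemma abs_comp_le: "k = (a,b,c) \<Longrightarrow> \<bar>real_of_int a\<bar> \<le> lnorm k \<and> \<bar>real_of_int b\<bar> \<le> lnorm k \<and> \<bar>real_of_int c\<bar> \<le> lnorm k"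
proof -
  assume k: "k = (a,b,c)"
  have L: "(lnorm k)^2 = (real_of_int a)^2 + (real_of_int b)^2 + (real_of_int c)^2" by (rule lnorm_sq[OF k])
  have L0: "lnorm k \<ge> 0" by (simp add: lnorm_def k)
  have "\<bar>real_of_int a\<bar>^2 \<le> (lnorm k)^2" "\<bar>real_of_int b\<bar>^2 \<le> (lnorm k)^2" "\<bar>real_of_int c\<bar>^2 \<le> (lnorm k)^2"
    using L by simp_all
  thus ?thesis using L0 power2_le_imp_le by blast
qed

lemma finite_ball: "finite {j::lat. lnorm j < r}"
proof -
  define n where "n = ceiling r"
  have "{j::lat. lnorm j < r} \<subseteq> {-n..n} \<times> {-n..n} \<times> {-n..n}"
  proof
    fix j :: lat assume "j \<in> {j. lnorm j < r}"
    hence jr: "lnorm j < r" by simp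
    obtain a b c where k: "j = (a,b,c)" by (cases j) auto
    have "real_of_int \<bar>a\<bar> < r" "real_of_int \<bar>b\<bar> < r" "real_of_int \<bar>c\<bar> < r"
      using abs_comp_le[OF k] jr by auto
    hence "\<bar>a\<bar> \<le> n" "\<bar>b\<bar> \<le> n" "\<bar>c\<bar> \<le> n" unfolding n_def by (simp_all add: le_ceiling_iff)
    thus "j \<in> {-n..n} \<times> {-n..n} \<times> {-n..n}" by (auto simp: k)
  qed
  thus ?thesis by (rule finite_subset) simp
qed

lemma gamma_global:
  fixes \<gamma> :: "lat \<Rightarrow> complex" and cg kg \<alpha> :: real
  assumes cg: "cg \<ge> 0"
    and g: "\<forall>k. k \<noteq> (0,0,0) \<and> lnorm k \<ge> kg \<longrightarrow> norm (\<gamma> k) \<le> cg * lnorm k powr \<alpha>"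
  shows "\<exists>G\<ge>0. \<forall>j. j \<noteq> (0,0,0) \<longrightarrow> norm (\<gamma> j) \<le> G * lnorm j powr \<alpha>"
proof -
  define F where "F = {j::lat. lnorm j < kg}"
  have fin: "finite F" unfolding F_def by (rule finite_ball)
  define G where "G = cg + (\<Sum>j\<in>F. norm (\<gamma> j) * lnorm j powr (-\<alpha>))"
  have snn: "0 \<le> (\<Sum>j\<in>F. norm (\<gamma> j) * lnorm j powr (-\<alpha>))" by (intro sum_nonneg) simp
  have G0: "G \<ge> 0" using cg snn by (simp add: G_def)
  have "norm (\<gamma> j) \<le> G * lnorm j powr \<alpha>" if j: "j \<noteq> (0,0,0)" for j
  proof (cases "j \<in> F")
    case True
    have L1: "lnorm j \<ge> 1" by (rule lnorm_ge1[OF j])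
    have "norm (\<gamma> j) * lnorm j powr (-\<alpha>) \<le> (\<Sum>j\<in>F. norm (\<gamma> j) * lnorm j powr (-\<alpha>))"
      by (rule member_le_sum[OF True _ fin]) simp
    also have "\<dots> \<le> G" using cg by (simp add: G_def)
    finally have a: "norm (\<gamma> j) * lnorm j powr (-\<alpha>) \<le> G" .
    have "norm (\<gamma> j) = (norm (\<gamma> j) * lnorm j powr (-\<alpha>)) * lnorm j powr \<alpha>"
      using powr_cancel1[OF L1, of \<alpha>] by (simp only: mult.assoc mult_1_right)
    also have "\<dots> \<le> G * lnorm j powr \<alpha>" by (rule mult_right_mono[OF a powr_ge_zero])
    finally show ?thesis .
  next
    case False
    hence "lnorm j \<ge> kg" by (simp add: F_def)
    hence "norm (\<gamma> j) \<le> cg * lnorm j powr \<alpha>" using g j by blast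
    also have "\<dots> \<le> G * lnorm j powr \<alpha>" by (rule mult_right_mono) (use snn in \<open>simp_all add: G_def\<close>)
    finally show ?thesis .
  qed
  thus ?thesis using G0 by blast
qed

lemma K_bound:
  assumes b: "\<beta> < 0" and kg: "kg > 1" and s: "s \<ge> 1"
  shows "s powr \<beta> \<le> Kbeta kg \<beta> s"
proof -
  have s1: "s powr \<beta> \<le> 1" using powr_mono[of \<beta> 0 s] b s by simp
  have k1: "(2*kg) powr \<beta> \<le> 1" using powr_mono[of \<beta> 0 "2*kg"] b kg by simp
  have kp: "(2*kg) powr \<beta> > 0" using kg by simp
  have "s powr \<beta> \<le> s powr \<beta> / (2*kg) powr \<beta>"
    using k1 kp by (simp add: le_divide_eq mult_left_le)
  also have "\<dots> = (s / (2*kg)) powr \<beta>" by (rule powr_divide[symmetric])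
  finally show ?thesis using s1 by (simp add: Kbeta_def)
qed



lemma powr_succ: "(x::real) \<ge> 1 \<Longrightarrow> x powr \<alpha> * x = x powr (\<alpha> + 1)"
proof -
  assume "x \<ge> 1"
  hence "x = x powr 1" by simp
  hence "x powr \<alpha> * x = x powr \<alpha> * x powr 1" by simp
  also have "\<dots> = x powr (\<alpha> + 1)" by (rule powr_add[symmetric])
  finally show ?thesis .
qed

lemma term_bound:
  fixes \<gamma> V W :: "lat \<Rightarrow> complex"
  assumes ax: "axis_pair ez fz" and U: "U \<ge> 0"
    and VW: "\<forall>k. k \<noteq> (0,0,0) \<longrightarrow> norm (V k) \<le> \<Xi> \<and> norm (W k) \<le> \<Xi>"
    and Gb: "\<forall>j. j \<noteq> (0,0,0) \<longrightarrow> norm (\<gamma> j) \<le> G * lnorm j powr \<alpha>"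
    and G0: "G \<ge> 0" and j0: "j \<noteq> (0,0,0)" and jk: "j \<noteq> k"
  shows "norm (complex_of_real (lnorm (lsub k j) powr \<beta>) * \<gamma> j * complex_of_real U *
        (complex_of_real (dot3 (CH_e ez (lsub k j)) (rv j)) * V (lsub k j)
       + complex_of_real (dot3 (CH_f fz (lsub k j)) (rv j)) * W (lsub k j)))
     \<le> (2*G*U*\<Xi>) * (lnorm (lsub k j) powr \<beta> * lnorm j powr (\<alpha>+1))"
proof -
  define m where "m = lsub k j"
  have m0: "m \<noteq> (0,0,0)" unfolding m_def by (rule lsub_nz[OF jk])
  define d1 where "d1 = dot3 (CH_e ez m) (rv j)"
  define d2 where "d2 = dot3 (CH_f fz m) (rv j)"
  define Nb where "Nb = lnorm m powr \<beta>"
  define L where "L = lnorm j"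
  have L1: "L \<ge> 1" unfolding L_def by (rule lnorm_ge1[OF j0])
  have d1b: "\<bar>d1\<bar> \<le> L" unfolding d1_def L_def lnorm_eq by (rule dot_unit_le[OF CH_e_unit[OF ax m0]])
  have d2b: "\<bar>d2\<bar> \<le> L" unfolding d2_def L_def lnorm_eq by (rule dot_unit_le[OF CH_f_unit[OF ax m0]])
  have VWm: "norm (V m) \<le> \<Xi> \<and> norm (W m) \<le> \<Xi>" using VW m0 by blast
  hence Vm: "norm (V m) \<le> \<Xi>" and Wm: "norm (W m) \<le> \<Xi>" by auto
  have X0: "\<Xi> \<ge> 0" using Vm norm_ge_zero order_trans by blast
  have gj: "norm (\<gamma> j) \<le> G * L powr \<alpha>" using Gb j0 unfolding L_def by blast
  have "norm (complex_of_real d1 * V m + complex_of_real d2 * W m)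
      \<le> norm (complex_of_real d1 * V m) + norm (complex_of_real d2 * W m)" by (rule norm_triangle_ineq)
  also have "\<dots> = \<bar>d1\<bar> * norm (V m) + \<bar>d2\<bar> * norm (W m)" by (simp add: norm_mult)
  also have "\<dots> \<le> L * \<Xi> + L * \<Xi>"
    by (intro add_mono mult_mono) (use d1b d2b Vm Wm L1 in auto)
  finally have inner: "norm (complex_of_real d1 * V m + complex_of_real d2 * W m) \<le> 2 * L * \<Xi>" by simp
  have "norm (complex_of_real Nb * \<gamma> j * complex_of_real U * (complex_of_real d1 * V m + complex_of_real d2 * W m))
     = Nb * norm (\<gamma> j) * U * norm (complex_of_real d1 * V m + complex_of_real d2 * W m)"
    using U by (simp add: norm_mult Nb_def)
  also have "\<dots> \<le> Nb * (G * L powr \<alpha>) * U * (2 * L * \<Xi>)"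
    by (intro mult_mono mult_left_mono gj inner) (simp_all add: Nb_def U X0 G0)
  also have "\<dots> = (2*G*U*\<Xi>) * (Nb * (L powr \<alpha> * L))" by (simp only: mult_ac)
  also have "\<dots> = (2*G*U*\<Xi>) * (Nb * L powr (\<alpha>+1))" by (simp only: powr_succ[OF L1])
  finally show ?thesis by (simp only: m_def d1_def d2_def Nb_def L_def)
qed



theorem mainTheorem5:
  fixes \<gamma> :: "lat \<Rightarrow> complex" and cg kg \<alpha> \<beta> :: real
  assumes "cg \<ge> 0" and "kg > 1" and "\<alpha> < 0"
    and "\<forall>k. k \<noteq> (0,0,0) \<longrightarrow> \<gamma> (lneg k) = cnj (\<gamma> k)"
    and "\<forall>k. k \<noteq> (0,0,0) \<and> lnorm k \<ge> kg \<longrightarrow> norm (\<gamma> k) \<le> cg * lnorm k powr \<alpha>"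
    and "\<beta> < -2" and "kg \<ge> 16" and "\<alpha> \<le> 2 * min \<beta> (-3) - 1"
  shows "\<exists>C::real. \<forall>ez fz U \<Xi> V W. axis_pair ez fz \<and> U \<ge> 0 \<and>
     (\<forall>k. k \<noteq> (0,0,0) \<longrightarrow> norm (V k) \<le> \<Xi> \<and> norm (W k) \<le> \<Xi> \<and>
          V (lneg k) = cnj (V k) \<and> W (lneg k) = cnj (W k)) \<longrightarrow>
     (\<forall>k. k \<noteq> (0,0,0) \<longrightarrow>
        norm (theta ez fz \<gamma> \<beta> U V W k) \<le> C * U * \<Xi> * lnorm k powr (-2) * Kbeta kg \<beta> (lnorm k))"
proof -
  obtain G where G0: "G \<ge> 0" and Gb: "\<forall>j. j \<noteq> (0,0,0) \<longrightarrow> norm (\<gamma> j) \<le> G * lnorm j powr \<alpha>"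
    using gamma_global[OF assms(1) assms(5)] by blast
  define a where "a = \<alpha> + 1"
  define D where "D = 2 powr (-\<beta>) * (S3 a + (1/2) * (S3 (2*\<beta>) + S3 (2*(a-\<beta>))))"
  have m1: "min \<beta> (-3) \<le> \<beta>" "min \<beta> (-3) \<le> -3" by simp_all
  have b0: "\<beta> < 0" using assms(6) by simp
  have pa: "a \<le> -4" using assms(8) unfolding a_def min_def by (auto split: if_splits)
  have pb: "2*\<beta> \<le> -4" using assms(6) by simp
  have pc: "2*(a-\<beta>) \<le> -4" using assms(8) unfolding a_def min_def by (auto split: if_splits)
  have S0: "\<And>p. S3 p \<ge> 0" unfolding S3_def by (rule infsum_nonneg) simp
  have D0: "D \<ge> 0" unfolding D_def using S0 by simp
  show ?thesis
  proof (rule exI[of _ "2*G*D"], intro allI impI, elim conjE)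
    fix ez fz :: "lat \<Rightarrow> vec3" and U \<Xi> :: real and V W :: "lat \<Rightarrow> complex" and k :: lat
    assume ax: "axis_pair ez fz" and U: "U \<ge> 0"
      and VW: "\<forall>k. k \<noteq> (0,0,0) \<longrightarrow> norm (V k) \<le> \<Xi> \<and> norm (W k) \<le> \<Xi> \<and>
          V (lneg k) = cnj (V k) \<and> W (lneg k) = cnj (W k)"
      and k: "k \<noteq> (0,0,0)"
    have VW': "\<forall>k. k \<noteq> (0,0,0) \<longrightarrow> norm (V k) \<le> \<Xi> \<and> norm (W k) \<le> \<Xi>" using VW by blast
    have "norm (V (1,0,0)) \<le> \<Xi>" using VW' by simp
    hence X0: "\<Xi> \<ge> 0" using norm_ge_zero order_trans by blast
    define A where "A = {j::lat. j \<noteq> (0,0,0) \<and> j \<noteq> k}"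
    define h where "h = (\<lambda>j. lnorm (lsub k j) powr \<beta> * lnorm j powr a)"
    define T where "T = (\<lambda>j. complex_of_real (lnorm (lsub k j) powr \<beta>) * \<gamma> j * complex_of_real U *
        (complex_of_real (dot3 (CH_e ez (lsub k j)) (rv j)) * V (lsub k j)
       + complex_of_real (dot3 (CH_f fz (lsub k j)) (rv j)) * W (lsub k j)))"
    define c where "c = 2*G*U*\<Xi>"
    define K where "K = lnorm k"
    have K1: "K \<ge> 1" unfolding K_def by (rule lnorm_ge1[OF k])
    have cs: "h summable_on A \<and> infsum h A \<le> D * K powr \<beta>"
      using conv_sum[OF b0 pa pb pc k] unfolding A_def h_def D_def K_def by blast
    have hA: "h summable_on A" using cs by blast
    have c0: "c \<ge> 0" unfolding c_def using G0 U X0 by simp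
    have Tb: "norm (T j) \<le> c * h j" if "j \<in> A" for j
      using term_bound[OF ax U VW' Gb G0, of j k \<beta>] that
      unfolding T_def c_def h_def a_def A_def by simp
    have chA: "(\<lambda>j. c * h j) summable_on A" by (rule summable_on_cmult_right[OF hA])
    have nT: "(\<lambda>j. norm (T j)) summable_on A"
      by (rule summable_on_comparison_test[OF chA]) (use Tb in auto)
    have TA: "T summable_on A" by (rule abs_summable_summable[OF nT])
    have "norm (infsum T A) \<le> infsum (\<lambda>j. c * h j) A"
      by (rule norm_infsum_le[OF has_sum_infsum[OF TA] has_sum_infsum[OF chA] Tb])
    also have "\<dots> = c * infsum h A" by (rule infsum_cmult_right) (use hA in blast)
    also have "\<dots> \<le> c * (D * K powr \<beta>)" by (rule mult_left_mono[OF _ c0]) (use cs in blast)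
    also have "\<dots> \<le> c * (D * Kbeta kg \<beta> K)"
      by (intro mult_left_mono c0 D0 K_bound[OF b0 assms(2) K1])
    finally have IB: "norm (infsum T A) \<le> c * (D * Kbeta kg \<beta> K)" .
    have th: "theta ez fz \<gamma> \<beta> U V W k = \<i> * complex_of_real (K powr (-2)) * infsum T A"
      unfolding theta_def T_def A_def K_def ..
    have "norm (theta ez fz \<gamma> \<beta> U V W k) = K powr (-2) * norm (infsum T A)"
      unfolding th by (simp add: norm_mult)
    also have "\<dots> \<le> K powr (-2) * (c * (D * Kbeta kg \<beta> K))"
      by (rule mult_left_mono[OF IB powr_ge_zero])
    also have "\<dots> = 2*G*D * U * \<Xi> * K powr (-2) * Kbeta kg \<beta> K"
      unfolding c_def by (simp only: mult_ac)
    finally show "norm (theta ez fz \<gamma> \<beta> U V W k) \<le> 2*G*D * U * \<Xi> * lnorm k powr (-2) * Kbeta kg \<beta> (lnorm k)"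
      unfolding K_def .
  qed
qed


end
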